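(* Let $K$ be a field, $c\in K\setminus\{0\}$ and $n\ge1$. There is a bijection between the set $\Psi_c^n$ of $c$-polygonal sequences of order $n$ and the set $\Psi_{-c}^n$ of $(-c)$-polygonal sequences of order $n$.
   Context: For a nonzero $a\in K$, the $a$-continuant polynomials $P_k^a$ ($k\ge-1$) are defined by $P_{-1}^a=0$, $P_0^a=1$, and for $k\ge1$, $P_k^a(x_1,\dots,x_k)=x_kP_{k-1}^a(x_1,\dots,x_{k-1})+aP_{k-2}^a(x_1,\dots,x_{k-2})$. A family $(x_i)_{i\in\mathbb{Z}}$ in $K$ is $n$-admissible (for $a$) if $P_{n+2}^a(x_i,\dots,x_{i+n+1})=0$ for all $i$. Let $\mathbb{B}_n=\{(i,j)\in\mathbb{Z}^2:-2\le j-i\le n+1\}$. An $a$-frieze of order $n$ is a function $f:\mathbb{B}_n\to K$ for which there is an $n$-admissible family $(x_i)$ (for $a$) with $f(i,j)=P^a_{j-i+1}(x_i,\dots,x_j)$ for all $(i,j)\in\mathbb{B}_n$. An $a$-polygonal sequence of order $n$ is a tuple $(f(m+1,m+1),f(m+2,m+2),\dots,f(m+n+3,m+n+3))\in K^{n+3}$ of $n+3$ consecutive first-row entries of some $a$-frieze $f$ of order $n$ (for some $m\in\mathbb{Z}$); $\Psi_a^n$ denotes the set of all of them. *)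

theory Defs
  imports Main
begin

text \<open>cont a x i k = P^a_k(x_i, x_(i+1), ..., x_(i+k-1)) for k >= 0.\<close>
fun cont :: "'a::field \<Rightarrow> (int \<Rightarrow> 'a) \<Rightarrow> int \<Rightarrow> nat \<Rightarrow> 'a" where
  "cont a x i 0 = 1"
| "cont a x i (Suc 0) = x i"
| "cont a x i (Suc (Suc k)) = x (i + int k + 1) * cont a x i (Suc k) + a * cont a x i k"

definition contz :: "'a::field \<Rightarrow> (int \<Rightarrow> 'a) \<Rightarrow> int \<Rightarrow> int \<Rightarrow> 'a" where
  "contz a x i k = (if k < 0 then 0 else cont a x i (nat k))"

definition admissible :: "'a::field \<Rightarrow> nat \<Rightarrow> (int \<Rightarrow> 'a) \<Rightarrow> bool" where
  "admissible a n x \<longleftrightarrow> (\<forall>i. cont a x i (n + 2) = 0)"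

definition Bn :: "nat \<Rightarrow> (int \<times> int) set" where
  "Bn n = {(i, j). -2 \<le> j - i \<and> j - i \<le> int n + 1}"

definition is_frieze :: "'a::field \<Rightarrow> nat \<Rightarrow> (int \<times> int \<Rightarrow> 'a) \<Rightarrow> bool" where
  "is_frieze a n f \<longleftrightarrow> (\<exists>x. admissible a n x \<and>
      (\<forall>i j. (i, j) \<in> Bn n \<longrightarrow> f (i, j) = contz a x i (j - i + 1)))"

definition Psi :: "'a::field \<Rightarrow> nat \<Rightarrow> 'a list set" where
  "Psi a n = {map (\<lambda>k. f (m + int k, m + int k)) [1..<n + 4] | f m. is_frieze a n f}"

end

theory Submission
  imports Defs
begin

definition sgn_par :: "int \<Rightarrow> 'a::field" where
  "sgn_par j = (if even j then 1 else -1)"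

lemma sgn_par_add: "(sgn_par (j + int m) :: 'a::field) = sgn_par j * (-1)^m"
  by (induction m) (auto simp: sgn_par_def algebra_simps)

lemma sgn_par_sq: "(sgn_par j :: 'a::field) * sgn_par j = 1"
  by (simp add: sgn_par_def)

fun sg :: "'a::field \<Rightarrow> nat \<Rightarrow> 'a" where
  "sg u 0 = 1"
| "sg u (Suc k) = u * (-1)^k * sg u k"

lemma sg_nz: "u * u = 1 \<Longrightarrow> sg u k \<noteq> (0::'a::field)"
  by (induction k) auto

lemma cont_sign:
  "cont (-a) (\<lambda>j. sgn_par (j + t) * x j) i k = sg (sgn_par (i + t)) k * cont a x i k"
proof (induction a x i k rule: cont.induct)
  case (1 a x i) then show ?case by simp
next
  case (2 a x i) then show ?case by simp
next
  case (3 a x i k)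
  let ?u = "sgn_par (i + t) :: 'a"
  have uu: "?u * ?u = 1" by (rule sgn_par_sq)
  have s: "(sgn_par (i + int k + 1 + t) :: 'a) = ?u * (-1)^(Suc k)"
    using sgn_par_add[of "i+t" "Suc k"] by (simp add: algebra_simps)
  have e1: "sg ?u (Suc (Suc k)) = sgn_par (i + int k + 1 + t) * sg ?u (Suc k)"
    using s by (simp add: algebra_simps)
  have e2: "sg ?u (Suc (Suc k)) = - sg ?u k"
  proof -
    have "sg ?u (Suc (Suc k)) = (?u * ?u) * ((-1)^(Suc k) * (-1)^k) * sg ?u k"
      by (simp add: algebra_simps)
    also have "(-1::'a)^(Suc k) * (-1)^k = -1"
      by (simp add: power_add[symmetric] flip: power_Suc)
    finally show ?thesis using uu by simp
  qed
  let ?S = "sg ?u"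
  have "cont (-a) (\<lambda>j. sgn_par (j + t) * x j) i (Suc (Suc k))
     = (sgn_par (i + int k + 1 + t) * x (i + int k + 1)) * (?S (Suc k) * cont a x i (Suc k))
       + (-a) * (?S k * cont a x i k)"
    using 3 by simp
  also have "\<dots> = (sgn_par (i + int k + 1 + t) * ?S (Suc k)) * x (i + int k + 1) * cont a x i (Suc k)
       + a * (- ?S k) * cont a x i k" by (simp add: algebra_simps)
  also have "\<dots> = ?S (Suc (Suc k)) * (x (i + int k + 1) * cont a x i (Suc k) + a * cont a x i k)"
    by (simp only: e1[symmetric] e2[symmetric]) (simp add: algebra_simps)
  finally show ?case by simp
qed

definition gmap :: "'a::field list \<Rightarrow> 'a list" where
  "gmap l = map (\<lambda>p. sgn_par (int p) * l ! p) [0..<length l]"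

lemma gmap_invol: "gmap (gmap l) = (l :: 'a::field list)"
  by (rule nth_equalityI) (auto simp: gmap_def mult.assoc[symmetric] sgn_par_sq)

lemma gmap_Psi: assumes "l \<in> Psi a n" shows "gmap l \<in> Psi (-a) n"
proof -
  obtain f m where l: "l = map (\<lambda>k. f (m + int k, m + int k)) [1..<n + 4]"
    and fr: "is_frieze a n f"
    using assms unfolding Psi_def by blast
  obtain x where adm: "admissible a n x"
    and fx: "\<forall>i j. (i, j) \<in> Bn n \<longrightarrow> f (i, j) = contz a x i (j - i + 1)"
    using fr unfolding is_frieze_def by blast
  define x' where "x' = (\<lambda>j. sgn_par (j + (- m - 1)) * x j :: 'a)"
  define f' where "f' = (\<lambda>(i, j). contz (-a) x' i (j - i + 1))"
  have adm': "admissible (-a) n x'"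
    unfolding admissible_def x'_def
  proof
    fix i
    show "cont (- a) (\<lambda>j. sgn_par (j + (- m - 1)) * x j) i (n + 2) = 0"
      using adm unfolding admissible_def by (subst cont_sign) simp
  qed
  have fr': "is_frieze (-a) n f'"
    unfolding is_frieze_def f'_def using adm' by auto
  have diag: "f (i, i) = x i" for i
    using fx[rule_format, of i i] by (simp add: Bn_def contz_def)
  have diag': "f' (i, i) = x' i" for i
    by (simp add: f'_def contz_def)
  have "gmap l = map (\<lambda>k. f' (m + int k, m + int k)) [1..<n + 4]"
    by (rule nth_equalityI)
       (auto simp: gmap_def l diag diag' x'_def nth_append algebra_simps)
  then show ?thesis unfolding Psi_def using fr' by blast
qed

theorem mainTheorem14:
  fixes c :: "'a::field" and n :: nat
  assumes "c \<noteq> 0" and "1 \<le> n"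
  shows "\<exists>g. bij_betw g (Psi c n) (Psi (- c) n)"
proof
  show "bij_betw gmap (Psi c n) (Psi (- c) n)"
    by (rule bij_betw_byWitness[where f'=gmap])
       (auto simp: gmap_invol intro: gmap_Psi dest: gmap_Psi[where a="-c"])
qed

end
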